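(* Let $A=(B+M)^\top(B+M)$ where $B\in\mathbb{R}^{n\times d}$ has i.i.d. sub-Gaussian rows with parameter $\sigma^2$, zero mean, and covariance matrix $\Sigma$, and $M\in\mathbb{R}^{n\times d}$ satisfies $\|M\|_{1\to2}\le b$; assume $\Sigma$ has a $k$-sparse unit eigenvector for its largest eigenvalue $\lambda_1$ and $\lambda_1-\lambda_2>0$, where $\lambda_2$ is its second largest eigenvalue. Write $A=n\Sigma+E$, i.e. $E:=(B^\top B-n\Sigma)+(M^\top M+M^\top B+B^\top M)$. Then there is an absolute constant $C>0$ such that, with probability at least $1-\mathcal O(d^{-10})$, $$\frac1n\max_{i,j}|E_{ij}|\le C\sigma^2\Big(\sqrt{\tfrac{\log d}{n}}+\tfrac{\log d}{n}\Big)+\frac{b^2}{n}+\frac{2b}{\sqrt n}\sqrt{C\sigma^2\Big(\sqrt{\tfrac{\log d}{n}}+\tfrac{\log d}{n}\Big)+\max_{i\in[d]}\Sigma_{ii}}.$$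
   Context: $\|M\|_{1\to2}$ is the maximal Euclidean norm of a column of $M$. A random vector is sub-Gaussian with parameter $\sigma^2$ if each of its projections onto a unit vector is sub-Gaussian with variance proxy $\sigma^2$. *)

theory Defs
  imports "HOL-Probability.Probability" "Jordan_Normal_Form.Char_Poly" "HOL-Computational_Algebra.Polynomial"
begin

definition subgaussian :: "'a measure \<Rightarrow> ('a \<Rightarrow> real) \<Rightarrow> real \<Rightarrow> bool" where
  "subgaussian P X s2 \<longleftrightarrow> X \<in> borel_measurable P \<and> integrable P X \<and>
     (\<forall>l::real. integrable P (\<lambda>\<omega>. exp (l * (X \<omega> - (\<integral>\<omega>'. X \<omega>' \<partial>P)))) \<and>
        (\<integral>\<omega>. exp (l * (X \<omega> - (\<integral>\<omega>'. X \<omega>' \<partial>P))) \<partial>P) \<le> exp (l\<^sup>2 * s2 / 2))"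

text \<open>Eigenvalues (with multiplicity) of a real matrix whose characteristic polynomial
  splits over the reals (e.g. a symmetric one), listed in non-increasing order.\<close>
definition eigenvalues_desc :: "real mat \<Rightarrow> real list" where
  "eigenvalues_desc A = rev (sorted_list_of_multiset (proots (char_poly A)))"

definition norm_1to2 :: "real mat \<Rightarrow> real" where
  "norm_1to2 M = Max {sqrt (\<Sum>i<dim_row M. (M $$ (i, j))\<^sup>2) | j. j < dim_col M}"

definition row_rv :: "('a \<Rightarrow> real mat) \<Rightarrow> nat \<Rightarrow> nat \<Rightarrow> 'a \<Rightarrow> (nat \<Rightarrow> real)" where
  "row_rv B d i = (\<lambda>\<omega>. restrict (\<lambda>j. B \<omega> $$ (i, j)) {..<d})"

end

theory Submission
  imports Defs
begin

lemma exp_quad_bound: "exp (x::real) \<le> 1 + x + x\<^sup>2 * exp \<bar>x\<bar>"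
proof -
  obtain t where t: "\<bar>t\<bar> \<le> \<bar>x\<bar>" "exp x = (\<Sum>m<2. (x ^ m) / fact m) + (exp t / fact 2) * x ^ 2"
    using Maclaurin_exp_le[of x 2] by blast
  have "exp t \<le> exp \<bar>x\<bar>" using t(1) by simp
  moreover have "exp t / 2 \<le> exp t" by simp
  ultimately have "exp t / 2 \<le> exp \<bar>x\<bar>" by linarith
  hence "(exp t / 2) * x\<^sup>2 \<le> x\<^sup>2 * exp \<bar>x\<bar>"
    by (metis mult.commute mult_left_mono zero_le_power2)
  moreover have "exp x = 1 + x + (exp t / 2) * x\<^sup>2" using t(2) by (simp add: numeral_2_eq_2)
  ultimately show ?thesis by linarith
qed

lemma sq_le_exp: assumes "(u::real) \<ge> 0" shows "u\<^sup>2 \<le> 8 * exp (u/2)"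
proof -
  have "1 + u/2 + (u/2)\<^sup>2 / 2 \<le> exp (u/2)" using exp_lower_Taylor_quadratic[of "u/2"] assms by simp
  moreover have "(u/2)\<^sup>2 / 2 = u\<^sup>2/8" by (simp add: power_divide)
  ultimately show ?thesis using assms by simp
qed

lemma mix_bound:
  fixes y s :: real
  assumes s: "s > 0"
  defines "hw \<equiv> sqrt (8* s)"
  defines "m \<equiv> nat (floor (\<bar>y\<bar> / hw))"
  defines "a \<equiv> real m * hw / (2* s)"
  shows "exp (y\<^sup>2 / (4* s)) \<le> exp 2 * exp (-2*(real m)\<^sup>2) * (exp (a*y) + exp (-a*y))"
proof -
  have hw: "hw > 0" using s by (simp add: hw_def)
  have hh: "hw\<^sup>2 = 8* s" using s by (simp add: hw_def)
  have fl: "real m \<le> \<bar>y\<bar>/hw" "\<bar>y\<bar>/hw < real m + 1"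
    using hw by (auto simp: m_def)
  have l1: "real m * hw \<le> \<bar>y\<bar>" using fl(1) hw by (simp add: field_simps)
  have l2: "\<bar>y\<bar> < real m * hw + hw" using fl(2) hw by (simp add: field_simps)
  have "(\<bar>y\<bar> - real m * hw)\<^sup>2 \<le> hw\<^sup>2"
    using l1 l2 by (intro power_mono) auto
  hence "y\<^sup>2 \<le> hw\<^sup>2 + 2 * real m * hw * \<bar>y\<bar> - (real m)\<^sup>2 * hw\<^sup>2"
    by (simp add: power2_eq_square algebra_simps)
  hence "y\<^sup>2 \<le> 8* s + 2 * real m * hw * \<bar>y\<bar> - (real m)\<^sup>2 * (8* s)"
    unfolding hh .
  hence "y\<^sup>2 / (4* s) \<le> (8* s + 2 * real m * hw * \<bar>y\<bar> - (real m)\<^sup>2 * (8* s)) / (4* s)"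
    using s by (simp add: divide_right_mono)
  also have "\<dots> = 2 + a * \<bar>y\<bar> - 2 * (real m)\<^sup>2"
    using s by (simp add: a_def field_simps)
  finally have "exp (y\<^sup>2 / (4* s)) \<le> exp (2 + a * \<bar>y\<bar> - 2 * (real m)\<^sup>2)" by simp
  also have "\<dots> = exp 2 * exp (-2*(real m)\<^sup>2) * exp (a * \<bar>y\<bar>)"
    by (simp add: exp_add[symmetric] exp_diff)
  also have "exp (a * \<bar>y\<bar>) \<le> exp (a*y) + exp (-a*y)"
    by (cases "y \<ge> 0") (auto simp: add_increasing2 add_increasing)
  finally show ?thesis by (simp add: mult_left_mono)
qed

lemma expsq_bound:
  assumes P: "prob_space P" and sg: "subgaussian P Y s" and m0: "(\<integral>\<omega>. Y \<omega> \<partial>P) = 0" and s: "s > 0"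
  shows "integrable P (\<lambda>\<omega>. exp ((Y \<omega>)\<^sup>2 / (4* s)))"
    and "(\<integral>\<omega>. exp ((Y \<omega>)\<^sup>2 / (4* s)) \<partial>P) \<le> 4 * exp 2"
proof -
  interpret prob_space P by fact
  have Ym[measurable]: "Y \<in> borel_measurable P" using sg by (simp add: subgaussian_def)
  have mgf: "integrable P (\<lambda>\<omega>. exp (l * Y \<omega>))" "(\<integral>\<omega>. exp (l * Y \<omega>) \<partial>P) \<le> exp (l\<^sup>2 * s / 2)" for l
    using sg m0 by (auto simp: subgaussian_def)
  define hw where "hw = sqrt (8* s)"
  define a where "a m = real m * hw / (2* s)" for m :: nat
  define g where "g m \<omega> = ennreal (exp 2 * exp (-2*(real m)\<^sup>2) * (exp (a m * Y \<omega>) + exp (-(a m) * Y \<omega>)))" for m \<omega>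
  have gm[measurable]: "g m \<in> borel_measurable P" for m unfolding g_def by measurable
  have pw: "ennreal (exp ((Y \<omega>)\<^sup>2 / (4* s))) \<le> (\<Sum>m. g m \<omega>)" for \<omega>
  proof -
    define m0 where "m0 = nat (floor (\<bar>Y \<omega>\<bar> / hw))"
    have "exp ((Y \<omega>)\<^sup>2 / (4* s)) \<le> exp 2 * exp (-2*(real m0)\<^sup>2) * (exp (a m0 * Y \<omega>) + exp (-(a m0) * Y \<omega>))"
      using mix_bound[OF s, of "Y \<omega>"] by (simp add: m0_def a_def hw_def)
    hence "ennreal (exp ((Y \<omega>)\<^sup>2 / (4* s))) \<le> g m0 \<omega>" by (simp add: g_def ennreal_leI)
    also have "g m0 \<omega> \<le> (\<Sum>m. g m \<omega>)"
      using sum_le_suminf[OF summableI, of "{m0}" "\<lambda>m. g m \<omega>"] by simp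
    finally show ?thesis .
  qed
  have int_g: "(\<integral>\<^sup>+\<omega>. g m \<omega> \<partial>P) \<le> ennreal (2 * exp 2 * (1/2)^m)" for m
  proof -
    have ih: "integrable P (\<lambda>\<omega>. exp 2 * exp (-2*(real m)\<^sup>2) * (exp (a m * Y \<omega>) + exp (-(a m) * Y \<omega>)))"
      using mgf(1)[of "a m"] mgf(1)[of "-a m"] by auto
    have "(\<integral>\<^sup>+\<omega>. g m \<omega> \<partial>P) = ennreal (\<integral>\<omega>. exp 2 * exp (-2*(real m)\<^sup>2) * (exp (a m * Y \<omega>) + exp (-(a m) * Y \<omega>)) \<partial>P)"
      unfolding g_def by (rule nn_integral_eq_integral[OF ih]) auto
    also have "(\<integral>\<omega>. exp 2 * exp (-2*(real m)\<^sup>2) * (exp (a m * Y \<omega>) + exp (-(a m) * Y \<omega>)) \<partial>P)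
        = exp 2 * exp (-2*(real m)\<^sup>2) * ((\<integral>\<omega>. exp (a m * Y \<omega>) \<partial>P) + (\<integral>\<omega>. exp (-(a m) * Y \<omega>) \<partial>P))"
      using mgf(1)[of "a m"] mgf(1)[of "-a m"] by simp
    also have "\<dots> \<le> exp 2 * exp (-2*(real m)\<^sup>2) * (exp ((a m)\<^sup>2 * s / 2) + exp ((-a m)\<^sup>2 * s / 2))"
      using mgf(2)[of "a m"] mgf(2)[of "-a m"] by (intro mult_left_mono add_mono) auto
    also have "(a m)\<^sup>2 * s / 2 = (real m)\<^sup>2"
      using s by (simp add: a_def hw_def power_mult_distrib power_divide field_simps power2_eq_square)
    also have "exp 2 * exp (-2*(real m)\<^sup>2) * (exp ((real m)\<^sup>2) + exp ((-a m)\<^sup>2 * s / 2))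
        = 2 * exp 2 * exp (-((real m)\<^sup>2))"
      using \<open>(a m)\<^sup>2 * s / 2 = (real m)\<^sup>2\<close> by (simp add: exp_add[symmetric] algebra_simps)
    also have "\<dots> \<le> 2 * exp 2 * (1/2)^m"
    proof -
      have "exp (-((real m)\<^sup>2)) \<le> exp (- real m)"
      proof -
        have "real m \<le> real (m * m)" by (metis le_square of_nat_le_iff)
        thus ?thesis by (simp add: power2_eq_square)
      qed
      also have "exp (- real m) = exp (-1) ^ m" by (simp add: exp_of_nat_mult[symmetric])
      also have "\<dots> \<le> (1/2)^m"
      proof (rule power_mono)
        have "2 \<le> exp (1::real)" using exp_ge_add_one_self[of 1] by simp
        thus "exp (-1) \<le> (1/2::real)" by (simp add: exp_minus field_simps)
      qed simp
      finally show ?thesis by simp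
    qed
    finally show ?thesis by (simp add: ennreal_leI)
  qed
  have bound: "(\<integral>\<^sup>+\<omega>. exp ((Y \<omega>)\<^sup>2 / (4* s)) \<partial>P) \<le> ennreal (4 * exp 2)"
  proof -
    have "(\<integral>\<^sup>+\<omega>. exp ((Y \<omega>)\<^sup>2 / (4* s)) \<partial>P) \<le> (\<integral>\<^sup>+\<omega>. (\<Sum>m. g m \<omega>) \<partial>P)"
      by (intro nn_integral_mono pw)
    also have "\<dots> = (\<Sum>m. \<integral>\<^sup>+\<omega>. g m \<omega> \<partial>P)" by (rule nn_integral_suminf) simp
    also have "\<dots> \<le> (\<Sum>m. ennreal (2 * exp 2 * (1/2)^m))"
      by (intro suminf_le int_g summableI)
    also have "\<dots> = ennreal (\<Sum>m. 2 * exp 2 * (1/2)^m)"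
      by (intro suminf_ennreal2) (auto intro!: summable_mult summable_geometric)
    also have "(\<Sum>m. 2 * exp 2 * (1/2::real)^m) = 4 * exp 2"
      using suminf_mult[OF summable_geometric[of "1/2::real"], of "2 * exp 2"] suminf_geometric[of "1/2::real"]
      by simp
    finally show ?thesis .
  qed
  show int: "integrable P (\<lambda>\<omega>. exp ((Y \<omega>)\<^sup>2 / (4* s)))"
  proof (rule integrableI_bounded)
    show "(\<lambda>\<omega>. exp ((Y \<omega>)\<^sup>2 / (4* s))) \<in> borel_measurable P" by measurable
    have "(\<integral>\<^sup>+\<omega>. ennreal (norm (exp ((Y \<omega>)\<^sup>2 / (4* s)))) \<partial>P) = (\<integral>\<^sup>+\<omega>. exp ((Y \<omega>)\<^sup>2 / (4* s)) \<partial>P)"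
      by simp
    also have "\<dots> < \<infinity>" using bound le_less_trans[OF bound ennreal_less_top] by simp
    finally show "(\<integral>\<^sup>+\<omega>. ennreal (norm (exp ((Y \<omega>)\<^sup>2 / (4* s)))) \<partial>P) < \<infinity>" .
  qed
  have "(\<integral>\<omega>. exp ((Y \<omega>)\<^sup>2 / (4* s)) \<partial>P) = enn2real (\<integral>\<^sup>+\<omega>. exp ((Y \<omega>)\<^sup>2 / (4* s)) \<partial>P)"
    by (rule integral_eq_nn_integral) auto
  also have "\<dots> \<le> 4 * exp 2"
    using bound by (simp add: enn2real_leI)
  finally show "(\<integral>\<omega>. exp ((Y \<omega>)\<^sup>2 / (4* s)) \<partial>P) \<le> 4 * exp 2" .
qed


definition cB :: real where "cB = 2048 * exp 2 * exp (2 * exp 2)"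

lemma subexp_mgf:
  assumes P: "prob_space P" and sg1: "subgaussian P Y1 s" and sg2: "subgaussian P Y2 s"
    and m1: "(\<integral>\<omega>. Y1 \<omega> \<partial>P) = 0" and m2: "(\<integral>\<omega>. Y2 \<omega> \<partial>P) = 0" and s: "s > 0"
    and int12: "integrable P (\<lambda>\<omega>. Y1 \<omega> * Y2 \<omega>)" and mu: "(\<integral>\<omega>. Y1 \<omega> * Y2 \<omega> \<partial>P) = \<mu>"
    and lam: "\<bar>l\<bar> \<le> 1 / (16 * s)"
  shows "integrable P (\<lambda>\<omega>. exp (l * (Y1 \<omega> * Y2 \<omega> - \<mu>)))"
    and "(\<integral>\<omega>. exp (l * (Y1 \<omega> * Y2 \<omega> - \<mu>)) \<partial>P) \<le> exp (cB * l\<^sup>2 * s\<^sup>2)"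
proof -
  interpret prob_space P by fact
  define K where "K = 4 * s"
  define c0 :: real where "c0 = 4 * exp 2"
  have K: "K > 0" using s by (simp add: K_def)
  have Y1m[measurable]: "Y1 \<in> borel_measurable P" using sg1 by (simp add: subgaussian_def)
  have Y2m[measurable]: "Y2 \<in> borel_measurable P" using sg2 by (simp add: subgaussian_def)
  define Q1 where "Q1 \<omega> = exp ((Y1 \<omega>)\<^sup>2 / K)" for \<omega>
  define Q2 where "Q2 \<omega> = exp ((Y2 \<omega>)\<^sup>2 / K)" for \<omega>
  have iQ1: "integrable P Q1" and EQ1: "integral\<^sup>L P Q1 \<le> c0"
    using expsq_bound[OF P sg1 m1 s] by (simp_all add: Q1_def[abs_def] K_def c0_def)
  have iQ2: "integrable P Q2" and EQ2: "integral\<^sup>L P Q2 \<le> c0"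
    using expsq_bound[OF P sg2 m2 s] by (simp_all add: Q2_def[abs_def] K_def c0_def)
  have sqQ: "y\<^sup>2 \<le> K * exp (y\<^sup>2 / K)" for y
  proof -
    have "y\<^sup>2 / K \<le> exp (y\<^sup>2 / K)" using exp_ge_add_one_self[of "y\<^sup>2 / K"] by linarith
    thus ?thesis using K by (simp add: field_simps)
  qed
  have prodb: "\<bar>Y1 \<omega> * Y2 \<omega>\<bar> \<le> ((Y1 \<omega>)\<^sup>2 + (Y2 \<omega>)\<^sup>2) / 2" for \<omega>
  proof -
    have "0 \<le> (\<bar>Y1 \<omega>\<bar> - \<bar>Y2 \<omega>\<bar>)\<^sup>2" by simp
    thus ?thesis by (simp add: power2_eq_square algebra_simps abs_mult)
  qed
  have mub: "\<bar>\<mu>\<bar> \<le> K * c0"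
  proof -
    have "\<bar>\<mu>\<bar> \<le> (\<integral>\<omega>. norm (Y1 \<omega> * Y2 \<omega>) \<partial>P)"
      using integral_norm_bound[of P "\<lambda>\<omega>. Y1 \<omega> * Y2 \<omega>"] mu by simp
    also have "\<dots> \<le> (\<integral>\<omega>. K * (Q1 \<omega> + Q2 \<omega>) / 2 \<partial>P)"
    proof (rule integral_mono)
      show "integrable P (\<lambda>\<omega>. norm (Y1 \<omega> * Y2 \<omega>))" using int12 by simp
      show "integrable P (\<lambda>\<omega>. K * (Q1 \<omega> + Q2 \<omega>) / 2)" using iQ1 iQ2 by simp
      fix \<omega> show "norm (Y1 \<omega> * Y2 \<omega>) \<le> K * (Q1 \<omega> + Q2 \<omega>) / 2"
        using prodb[of \<omega>] sqQ[of "Y1 \<omega>"] sqQ[of "Y2 \<omega>"] by (simp add: Q1_def[abs_def] Q2_def[abs_def] algebra_simps)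
    qed
    also have "\<dots> = K * (integral\<^sup>L P Q1 + integral\<^sup>L P Q2) / 2"
      using iQ1 iQ2 by simp
    also have "\<dots> \<le> K * c0" proof - have "K * (integral\<^sup>L P Q1 + integral\<^sup>L P Q2) \<le> K * (2*c0)" using EQ1 EQ2 K by (intro mult_left_mono) auto thus ?thesis by simp qed
    finally show ?thesis .
  qed
  define W where "W \<omega> = exp (c0/2) * (Q1 \<omega> + Q2 \<omega>) / 2" for \<omega>
  have iW: "integrable P W" using iQ1 iQ2 by (simp add: W_def[abs_def])
  have EW: "integral\<^sup>L P W \<le> exp (c0/2) * c0"
  proof -
    have "integral\<^sup>L P W = exp (c0/2) * (integral\<^sup>L P Q1 + integral\<^sup>L P Q2) / 2"
      using iQ1 iQ2 by (simp add: W_def[abs_def])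
    also have "\<dots> \<le> exp (c0/2) * c0" proof - have "(integral\<^sup>L P Q1 + integral\<^sup>L P Q2) / 2 \<le> c0" using EQ1 EQ2 by simp hence "exp (c0/2) * ((integral\<^sup>L P Q1 + integral\<^sup>L P Q2) / 2) \<le> exp (c0/2) * c0" by (intro mult_left_mono) auto thus ?thesis by simp qed
    finally show ?thesis .
  qed
  define Z where "Z \<omega> = Y1 \<omega> * Y2 \<omega> - \<mu>" for \<omega>
  have Zm[measurable]: "Z \<in> borel_measurable P" unfolding Z_def[abs_def] by measurable
  have ZW: "exp (\<bar>Z \<omega>\<bar> / (2*K)) \<le> W \<omega>" for \<omega>
  proof -
    define p where "p = exp ((Y1 \<omega>)\<^sup>2 / (4*K))"
    define q where "q = exp ((Y2 \<omega>)\<^sup>2 / (4*K))"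
    have "\<bar>Z \<omega>\<bar> \<le> ((Y1 \<omega>)\<^sup>2 + (Y2 \<omega>)\<^sup>2) / 2 + K * c0"
      using prodb[of \<omega>] mub abs_triangle_ineq4[of "Y1 \<omega> * Y2 \<omega>" \<mu>] unfolding Z_def[abs_def] by linarith
    hence "\<bar>Z \<omega>\<bar> / (2*K) \<le> (Y1 \<omega>)\<^sup>2 / (4*K) + (Y2 \<omega>)\<^sup>2 / (4*K) + c0/2"
      using K by (simp add: field_simps)
    hence "exp (\<bar>Z \<omega>\<bar> / (2*K)) \<le> exp ((Y1 \<omega>)\<^sup>2 / (4*K) + (Y2 \<omega>)\<^sup>2 / (4*K) + c0/2)" by simp
    also have "\<dots> = exp (c0/2) * (p * q)" by (simp add: p_def q_def exp_add)
    also have "p * q \<le> (p\<^sup>2 + q\<^sup>2) / 2"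
    proof -
      have "0 \<le> (p - q)\<^sup>2" by simp
      thus ?thesis by (simp add: power2_eq_square algebra_simps)
    qed
    also have "p\<^sup>2 \<le> Q1 \<omega>"
    proof -
      have "p\<^sup>2 = exp (2 * ((Y1 \<omega>)\<^sup>2 / (4*K)))" by (simp add: p_def power2_eq_square exp_add[symmetric])
      also have "\<dots> \<le> Q1 \<omega>" unfolding Q1_def[abs_def] using K by (simp add: field_simps)
      finally show ?thesis .
    qed
    also have "q\<^sup>2 \<le> Q2 \<omega>"
    proof -
      have "q\<^sup>2 = exp (2 * ((Y2 \<omega>)\<^sup>2 / (4*K)))" by (simp add: q_def power2_eq_square exp_add[symmetric])
      also have "\<dots> \<le> Q2 \<omega>" unfolding Q2_def[abs_def] using K by (simp add: field_simps)
      finally show ?thesis .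
    qed
    finally show ?thesis by (simp add: W_def[abs_def] mult_left_mono divide_right_mono)
  qed
  have lamK: "\<bar>l\<bar> \<le> 1 / (4*K)" using lam by (simp add: K_def)
  have expZ: "exp (l * Z \<omega>) \<le> exp (\<bar>Z \<omega>\<bar> / (2*K))" for \<omega>
  proof -
    have "l * Z \<omega> \<le> \<bar>l\<bar> * \<bar>Z \<omega>\<bar>" by (simp add: abs_mult[symmetric])
    also have "\<dots> \<le> (1 / (4*K)) * \<bar>Z \<omega>\<bar>" using lamK by (intro mult_right_mono) auto
    also have "\<dots> \<le> \<bar>Z \<omega>\<bar> / (2*K)" using K by (simp add: field_simps)
    finally show ?thesis by simp
  qed
  show intE: "integrable P (\<lambda>\<omega>. exp (l * (Y1 \<omega> * Y2 \<omega> - \<mu>)))"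
  proof (rule Bochner_Integration.integrable_bound[OF iW])
    show "(\<lambda>\<omega>. exp (l * (Y1 \<omega> * Y2 \<omega> - \<mu>))) \<in> borel_measurable P" by measurable
    show "AE \<omega> in P. norm (exp (l * (Y1 \<omega> * Y2 \<omega> - \<mu>))) \<le> norm (W \<omega>)"
    proof (intro AE_I2)
      fix \<omega>
      have "0 \<le> W \<omega>" by (simp add: W_def[abs_def] Q1_def[abs_def] Q2_def[abs_def])
      thus "norm (exp (l * (Y1 \<omega> * Y2 \<omega> - \<mu>))) \<le> norm (W \<omega>)"
        using expZ[of \<omega>] ZW[of \<omega>] unfolding Z_def[abs_def] real_norm_def abs_exp_cancel using order.trans abs_of_nonneg by (metis (no_types, lifting))
    qed
  qed
  define R where "R \<omega> = 1 + l * Z \<omega> + 8 * (2*K)\<^sup>2 * l\<^sup>2 * W \<omega>" for \<omega>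
  have pwR: "exp (l * Z \<omega>) \<le> R \<omega>" for \<omega>
  proof -
    have "exp (l * Z \<omega>) \<le> 1 + l * Z \<omega> + (l * Z \<omega>)\<^sup>2 * exp \<bar>l * Z \<omega>\<bar>"
      by (rule exp_quad_bound)
    also have "(l * Z \<omega>)\<^sup>2 * exp \<bar>l * Z \<omega>\<bar> \<le> l\<^sup>2 * (8 * (2*K)\<^sup>2 * W \<omega>)"
    proof -
      have e1: "exp \<bar>l * Z \<omega>\<bar> \<le> exp (\<bar>Z \<omega>\<bar> / (4*K))"
      proof -
        have "\<bar>l * Z \<omega>\<bar> \<le> (1 / (4*K)) * \<bar>Z \<omega>\<bar>" using lamK unfolding abs_mult by (intro mult_right_mono) auto
        thus ?thesis using K by simp
      qed
      have e2: "(Z \<omega>)\<^sup>2 \<le> 8 * (2*K)\<^sup>2 * exp (\<bar>Z \<omega>\<bar> / (4*K))"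
      proof -
        have "(\<bar>Z \<omega>\<bar> / (2*K))\<^sup>2 \<le> 8 * exp ((\<bar>Z \<omega>\<bar> / (2*K)) / 2)"
          using K by (intro sq_le_exp) simp
        thus ?thesis using K by (simp add: power_divide field_simps)
      qed
      have "(Z \<omega>)\<^sup>2 * exp \<bar>l * Z \<omega>\<bar> \<le> 8 * (2*K)\<^sup>2 * exp (\<bar>Z \<omega>\<bar> / (4*K)) * exp (\<bar>Z \<omega>\<bar> / (4*K))"
        using e1 e2 by (intro mult_mono) auto
      also have "\<dots> = 8 * (2*K)\<^sup>2 * exp (\<bar>Z \<omega>\<bar> / (2*K))"
        by (simp add: mult.assoc exp_add[symmetric])
      also have "\<dots> \<le> 8 * (2*K)\<^sup>2 * W \<omega>" using ZW[of \<omega>] by (intro mult_left_mono) auto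
      finally have "(Z \<omega>)\<^sup>2 * exp \<bar>l * Z \<omega>\<bar> \<le> 8 * (2*K)\<^sup>2 * W \<omega>" . hence "l\<^sup>2 * ((Z \<omega>)\<^sup>2 * exp \<bar>l * Z \<omega>\<bar>) \<le> l\<^sup>2 * (8 * (2*K)\<^sup>2 * W \<omega>)" by (intro mult_left_mono) auto thus ?thesis by (simp add: power_mult_distrib mult.assoc)
    qed
    finally show ?thesis by (simp add: R_def[abs_def] algebra_simps)
  qed
  have iZ: "integrable P Z" unfolding Z_def[abs_def] using int12 by simp
  have EZ: "integral\<^sup>L P Z = 0" unfolding Z_def[abs_def] using int12 mu by (simp add: prob_space)
  have iR: "integrable P R" unfolding R_def[abs_def] using iZ iW by simp
  have "(\<integral>\<omega>. exp (l * (Y1 \<omega> * Y2 \<omega> - \<mu>)) \<partial>P) \<le> integral\<^sup>L P R"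
    using intE iR pwR by (intro integral_mono) (auto simp: Z_def[abs_def])
  also have "integral\<^sup>L P R = 1 + l * integral\<^sup>L P Z + 8 * (2*K)\<^sup>2 * l\<^sup>2 * integral\<^sup>L P W"
    unfolding R_def[abs_def] using iZ iW by (simp add: prob_space)
  also have "\<dots> \<le> 1 + cB * l\<^sup>2 * s\<^sup>2"
  proof -
    have "8 * (2*K)\<^sup>2 * l\<^sup>2 * integral\<^sup>L P W \<le> 8 * (2*K)\<^sup>2 * l\<^sup>2 * (exp (c0/2) * c0)"
      using EW by (intro mult_left_mono) auto
    also have "\<dots> = cB * l\<^sup>2 * s\<^sup>2"
      by (simp add: K_def c0_def cB_def power2_eq_square)
    finally show ?thesis using EZ by simp
  qed
  also have "\<dots> \<le> exp (cB * l\<^sup>2 * s\<^sup>2)" by (rule exp_ge_add_one_self[THEN order.trans]) simp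
  finally show "(\<integral>\<omega>. exp (l * (Y1 \<omega> * Y2 \<omega> - \<mu>)) \<partial>P) \<le> exp (cB * l\<^sup>2 * s\<^sup>2)" .
qed


lemma chernoff_sum:
  assumes P: "prob_space P" and ind: "prob_space.indep_vars P (\<lambda>_. borel) X {..<n}"
    and mgf: "\<And>k. k < n \<Longrightarrow> integrable P (\<lambda>\<omega>. exp (l * X k \<omega>)) \<and> (\<integral>\<omega>. exp (l * X k \<omega>) \<partial>P) \<le> exp B"
    and l: "l > 0"
  shows "measure P {\<omega> \<in> space P. (\<Sum>k<n. X k \<omega>) \<ge> a} \<le> exp (- l * a + real n * B)"
proof -
  interpret prob_space P by fact
  have ind2: "indep_vars (\<lambda>_. borel) (\<lambda>k \<omega>. exp (l * X k \<omega>)) {..<n}"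
    by (rule indep_vars_compose2[OF ind]) measurable
  have Xm[measurable]: "X k \<in> borel_measurable P" if "k < n" for k
    using ind that by (auto simp: indep_vars_def)
  have eq: "exp (l * (\<Sum>k<n. X k \<omega>)) = (\<Prod>k<n. exp (l * X k \<omega>))" for \<omega>
    by (simp add: sum_distrib_left exp_sum)
  have intP: "integrable P (\<lambda>\<omega>. \<Prod>k<n. exp (l * X k \<omega>))"
    using mgf by (intro indep_vars_integrable[OF _ ind2]) auto
  have EP: "(\<integral>\<omega>. (\<Prod>k<n. exp (l * X k \<omega>)) \<partial>P) = (\<Prod>k<n. \<integral>\<omega>. exp (l * X k \<omega>) \<partial>P)"
    using mgf by (intro indep_vars_lebesgue_integral[OF _ ind2]) auto
  also have "\<dots> \<le> (\<Prod>k<n. exp B)"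
    using mgf by (intro prod_mono) (auto intro: integral_nonneg_AE)
  also have "\<dots> = exp (real n * B)" by (simp add: exp_of_nat_mult)
  finally have EPb: "(\<integral>\<omega>. (\<Prod>k<n. exp (l * X k \<omega>)) \<partial>P) \<le> exp (real n * B)" .
  have sets_eq: "{\<omega> \<in> space P. (\<Sum>k<n. X k \<omega>) \<ge> a} = {\<omega> \<in> space P. (\<Prod>k<n. exp (l * X k \<omega>)) \<ge> exp (l * a)}"
    using l by (auto simp: eq[symmetric])
  have "measure P {\<omega> \<in> space P. (\<Prod>k<n. exp (l * X k \<omega>)) \<ge> exp (l * a)}
      \<le> (\<integral>\<omega>. (\<Prod>k<n. exp (l * X k \<omega>)) \<partial>P) / exp (l * a)"
    by (rule integral_Markov_inequality_measure[OF intP, of "space P"]) (auto intro!: AE_I2 prod_nonneg)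
  also have "\<dots> \<le> exp (real n * B) / exp (l * a)"
    using EPb by (simp add: divide_right_mono)
  also have "\<dots> = exp (- l * a + real n * B)" by (subst exp_diff[symmetric]) (simp add: algebra_simps)
  finally show ?thesis unfolding sets_eq .
qed

definition CC :: real where "CC = 192 + cB / 16"

lemma tail_one:
  fixes n d :: nat and \<tau> :: real and X :: "nat \<Rightarrow> 'a \<Rightarrow> real"
  assumes P: "prob_space P" and ind: "prob_space.indep_vars P (\<lambda>_. borel) X {..<n}"
    and s: "s > 0" and n: "n \<ge> 1" and d: "real d \<ge> 2"
    and mgf: "\<And>k l. k < n \<Longrightarrow> \<bar>l\<bar> \<le> 1 / (16 * s) \<Longrightarrow>
       integrable P (\<lambda>\<omega>. exp (l * X k \<omega>)) \<and> (\<integral>\<omega>. exp (l * X k \<omega>) \<partial>P) \<le> exp (cB * l\<^sup>2 * s\<^sup>2)"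
    and tau: "\<tau> \<ge> CC * s * (sqrt (ln d / n) + ln d / n)"
  shows "measure P {\<omega> \<in> space P. (\<Sum>k<n. X k \<omega>) \<ge> n * \<tau>} \<le> real d powr (-12)"
proof -
  define L where "L = ln (real d)"
  define r where "r = sqrt (L / n)"
  have L: "L > 0" using d by (simp add: L_def)
  have nr: "real n > 0" using n by simp
  have r: "r > 0" using L nr by (simp add: r_def)
  have r2: "r\<^sup>2 = L / n" using L nr by (simp add: r_def)
  have nr2: "real n * r\<^sup>2 = L" using r2 nr by simp
  have tau': "\<tau> \<ge> CC * s * (r + r\<^sup>2)" using tau r2 by (simp add: r_def L_def)
  have cB: "cB > 0" by (simp add: cB_def)
  have CCe: "CC / 16 - cB / 256 = 12" by (simp add: CC_def field_simps)
  have key: "\<exists>l>0. \<bar>l\<bar> \<le> 1 / (16 * s) \<and> - l * (n * \<tau>) + real n * (cB * l\<^sup>2 * s\<^sup>2) \<le> - 12 * L"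
  proof (cases "r \<le> 1")
    case True
    define l where "l = r / (16 * s)"
    have l0: "l > 0" using r s by (simp add: l_def)
    have lb: "\<bar>l\<bar> \<le> 1 / (16 * s)" using True s r by (simp add: l_def divide_right_mono)
    have "- l * (n * \<tau>) + real n * (cB * l\<^sup>2 * s\<^sup>2) \<le> - 12 * L" proof -
    have "l * (n * \<tau>) \<ge> l * (n * (CC * s * (r + r\<^sup>2)))"
      using tau' l0 nr by (intro mult_left_mono) auto
    moreover have "l * (n * (CC * s * (r + r\<^sup>2))) \<ge> l * (n * (CC * s * r))"
      using l0 nr r s cB by (intro mult_left_mono) (auto simp: CC_def)
    moreover have "l * (n * (CC * s * r)) = (CC / 16) * (real n * r\<^sup>2)"
      using s by (simp add: l_def power2_eq_square field_simps)
    moreover have "real n * (cB * l\<^sup>2 * s\<^sup>2) = (cB / 256) * (real n * r\<^sup>2)"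
      using s by (simp add: l_def power2_eq_square field_simps)
    moreover have "(CC / 16) * (real n * r\<^sup>2) = 12 * L + (cB / 256) * L"
      using nr2 by (simp add: CC_def field_simps)
    moreover have "(cB / 256) * (real n * r\<^sup>2) = (cB / 256) * L" using nr2 by simp
    moreover have "- l * (n * \<tau>) = - (l * (n * \<tau>))" by simp
    ultimately show "- l * (n * \<tau>) + real n * (cB * l\<^sup>2 * s\<^sup>2) \<le> - 12 * L"
      by linarith
  qed
    thus ?thesis using l0 lb by blast
  next
    case False
    define l where "l = 1 / (16 * s)"
    have l0: "l > 0" using s by (simp add: l_def)
    have "- l * (n * \<tau>) + real n * (cB * l\<^sup>2 * s\<^sup>2) \<le> - 12 * L" proof -
    have "l * (n * \<tau>) \<ge> l * (n * (CC * s * (r + r\<^sup>2)))"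
      using tau' l0 nr by (intro mult_left_mono) auto
    moreover have "l * (n * (CC * s * (r + r\<^sup>2))) \<ge> l * (n * (CC * s * r\<^sup>2))"
      using l0 nr r s cB by (intro mult_left_mono) (auto simp: CC_def)
    moreover have "l * (n * (CC * s * r\<^sup>2)) = (CC / 16) * (real n * r\<^sup>2)"
      using s by (simp add: l_def power2_eq_square field_simps)
    moreover have "real n * (cB * l\<^sup>2 * s\<^sup>2) \<le> (cB / 256) * (real n * r\<^sup>2)"
    proof -
      have "1 * 1 \<le> r * r" using False by (intro mult_mono) auto
      hence "1 \<le> r\<^sup>2" by (simp add: power2_eq_square)
      hence "real n * 1 \<le> real n * r\<^sup>2" using nr by (intro mult_left_mono) auto
      hence "(cB / 256) * real n \<le> (cB / 256) * (real n * r\<^sup>2)" using cB by (intro mult_left_mono) auto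
      moreover have "real n * (cB * l\<^sup>2 * s\<^sup>2) = (cB / 256) * real n"
        using s by (simp add: l_def power2_eq_square field_simps)
      ultimately show ?thesis by linarith
    qed
    moreover have "(CC / 16) * (real n * r\<^sup>2) = 12 * L + (cB / 256) * L"
      using nr2 by (simp add: CC_def field_simps)
    moreover have "(cB / 256) * (real n * r\<^sup>2) = (cB / 256) * L" using nr2 by simp
    moreover have "- l * (n * \<tau>) = - (l * (n * \<tau>))" by simp
    ultimately show "- l * (n * \<tau>) + real n * (cB * l\<^sup>2 * s\<^sup>2) \<le> - 12 * L"
      by linarith
    qed
    moreover have "\<bar>l\<bar> \<le> 1 / (16 * s)" using l0 by (simp add: l_def)
    ultimately show ?thesis using l0 by blast
  qed
  then obtain l where l: "l > 0" "\<bar>l\<bar> \<le> 1 / (16 * s)"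
    and ex: "- l * (n * \<tau>) + real n * (cB * l\<^sup>2 * s\<^sup>2) \<le> - 12 * L" by blast
  have "measure P {\<omega> \<in> space P. (\<Sum>k<n. X k \<omega>) \<ge> n * \<tau>} \<le> exp (- l * (n * \<tau>) + real n * (cB * l\<^sup>2 * s\<^sup>2))"
    using mgf l by (intro chernoff_sum[OF P ind]) auto
  also have "\<dots> \<le> exp (- 12 * L)" using ex by simp
  also have "\<dots> = real d powr (-12)" using d by (simp add: powr_def L_def)
  finally show ?thesis .
qed

lemma tail_two:
  fixes n d :: nat and \<tau> :: real and X :: "nat \<Rightarrow> 'a \<Rightarrow> real"
  assumes P: "prob_space P" and ind: "prob_space.indep_vars P (\<lambda>_. borel) X {..<n}"
    and s: "s > 0" and n: "n \<ge> 1" and d: "real d \<ge> 2"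
    and mgf: "\<And>k l. k < n \<Longrightarrow> \<bar>l\<bar> \<le> 1 / (16 * s) \<Longrightarrow>
       integrable P (\<lambda>\<omega>. exp (l * X k \<omega>)) \<and> (\<integral>\<omega>. exp (l * X k \<omega>) \<partial>P) \<le> exp (cB * l\<^sup>2 * s\<^sup>2)"
    and tau: "\<tau> \<ge> CC * s * (sqrt (ln d / n) + ln d / n)"
  shows "measure P {\<omega> \<in> space P. \<bar>\<Sum>k<n. X k \<omega>\<bar> > n * \<tau>} \<le> 2 * real d powr (-12)"
proof -
  interpret prob_space P by fact
  have Xm[measurable]: "X k \<in> borel_measurable P" if "k < n" for k
    using ind that by (auto simp: indep_vars_def)
  have ind': "indep_vars (\<lambda>_. borel) (\<lambda>k \<omega>. - X k \<omega>) {..<n}"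
    by (rule indep_vars_compose2[OF ind]) measurable
  have mgf': "integrable P (\<lambda>\<omega>. exp (l * - X k \<omega>)) \<and> (\<integral>\<omega>. exp (l * - X k \<omega>) \<partial>P) \<le> exp (cB * l\<^sup>2 * s\<^sup>2)"
    if "k < n" "\<bar>l\<bar> \<le> 1 / (16 * s)" for k l
    using mgf[of k "-l"] that by simp
  have A1: "measure P {\<omega> \<in> space P. (\<Sum>k<n. X k \<omega>) \<ge> n * \<tau>} \<le> real d powr (-12)"
    by (rule tail_one[OF P ind s n d mgf tau])
  have A2: "measure P {\<omega> \<in> space P. (\<Sum>k<n. - X k \<omega>) \<ge> n * \<tau>} \<le> real d powr (-12)"
    by (rule tail_one[OF P ind' s n d mgf' tau])
  have S1: "{\<omega> \<in> space P. (\<Sum>k<n. X k \<omega>) \<ge> n * \<tau>} \<in> sets P" by measurable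
  have S2: "{\<omega> \<in> space P. (\<Sum>k<n. - X k \<omega>) \<ge> n * \<tau>} \<in> sets P" by measurable
  have "measure P {\<omega> \<in> space P. \<bar>\<Sum>k<n. X k \<omega>\<bar> > n * \<tau>}
      \<le> measure P ({\<omega> \<in> space P. (\<Sum>k<n. X k \<omega>) \<ge> n * \<tau>} \<union> {\<omega> \<in> space P. (\<Sum>k<n. - X k \<omega>) \<ge> n * \<tau>})"
    by (rule finite_measure_mono) (auto simp: sum_negf S1 S2)
  also have "\<dots> \<le> measure P {\<omega> \<in> space P. (\<Sum>k<n. X k \<omega>) \<ge> n * \<tau>} + measure P {\<omega> \<in> space P. (\<Sum>k<n. - X k \<omega>) \<ge> n * \<tau>}"
    by (rule measure_Un_le[OF S1 S2])
  finally show ?thesis using A1 A2 by simp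
qed

lemma tmult_entry:
  assumes "A \<in> carrier_mat n d" "C \<in> carrier_mat n d" "i < d" "j < d"
  shows "(transpose_mat A * C) $$ (i,j) = (\<Sum>k<n. A $$ (k,i) * C $$ (k,j))"
  using assms by (simp add: scalar_prod_def lessThan_atLeast0)

lemma E_entry:
  assumes "Bm \<in> carrier_mat n d" "M \<in> carrier_mat n d" "S \<in> carrier_mat d d" "i < d" "j < d"
  shows "((transpose_mat Bm * Bm - of_nat n \<cdot>\<^sub>m S) + (transpose_mat M * M + transpose_mat M * Bm + transpose_mat Bm * M)) $$ (i,j)
    = ((\<Sum>k<n. Bm $$ (k,i) * Bm $$ (k,j)) - real n * S $$ (i,j)) + (\<Sum>k<n. M $$ (k,i) * M $$ (k,j))
      + (\<Sum>k<n. M $$ (k,i) * Bm $$ (k,j)) + (\<Sum>k<n. Bm $$ (k,i) * M $$ (k,j))"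
  using assms by (simp add: tmult_entry[symmetric])

lemma cs_abs: "\<bar>\<Sum>k<n. a k * c k\<bar> \<le> sqrt (\<Sum>k<n. (a k)\<^sup>2) * sqrt (\<Sum>k<n. (c k)\<^sup>2)"
proof -
  have "(\<Sum>k<n. a k * c k)\<^sup>2 \<le> (\<Sum>k<n. (a k)\<^sup>2) * (\<Sum>k<n. (c k)\<^sup>2)"
    by (rule Cauchy_Schwarz_ineq_sum)
  hence "sqrt ((\<Sum>k<n. a k * c k)\<^sup>2) \<le> sqrt ((\<Sum>k<n. (a k)\<^sup>2) * (\<Sum>k<n. (c k)\<^sup>2))"
    by (rule real_sqrt_le_mono)
  thus ?thesis by (simp add: real_sqrt_mult)
qed

lemma col_bound:
  assumes "M \<in> carrier_mat n d" "j < d" "norm_1to2 M \<le> b"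
  shows "sqrt (\<Sum>k<n. (M $$ (k,j))\<^sup>2) \<le> b"
proof -
  have eq: "{sqrt (\<Sum>i<dim_row M. (M $$ (i, j))\<^sup>2) | j. j < dim_col M} = (\<lambda>j. sqrt (\<Sum>i<n. (M $$ (i, j))\<^sup>2)) ` {..<d}"
    using assms by auto
  have "sqrt (\<Sum>k<n. (M $$ (k,j))\<^sup>2) \<le> norm_1to2 M"
    unfolding norm_1to2_def eq using assms by (intro Max_ge) auto
  thus ?thesis using assms by simp
qed

lemma det_bound:
  fixes n d :: nat and b t :: real
  assumes Bm: "Bm \<in> carrier_mat n d" and M: "M \<in> carrier_mat n d" and S: "S \<in> carrier_mat d d"
    and b: "norm_1to2 M \<le> b" and n: "n \<ge> 1" and d: "d \<ge> 1" and t: "t \<ge> 0"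
    and G: "\<forall>i<d. \<forall>j<d. \<bar>(\<Sum>k<n. Bm $$ (k,i) * Bm $$ (k,j)) - real n * S $$ (i,j)\<bar> \<le> real n * t"
  shows "(1 / real n) * Max {\<bar>((transpose_mat Bm * Bm - of_nat n \<cdot>\<^sub>m S) + (transpose_mat M * M + transpose_mat M * Bm + transpose_mat Bm * M)) $$ (i, j)\<bar> | i j. i < d \<and> j < d}
     \<le> t + b\<^sup>2 / n + 2 * b / sqrt n * sqrt (t + Max {S $$ (i, i) | i. i < d})"
proof -
  define Dm where "Dm = Max {S $$ (i, i) | i. i < d}"
  define E where "E = (transpose_mat Bm * Bm - of_nat n \<cdot>\<^sub>m S) + (transpose_mat M * M + transpose_mat M * Bm + transpose_mat Bm * M)"
  define cB where "cB j = sqrt (\<Sum>k<n. (Bm $$ (k,j))\<^sup>2)" for j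
  define cM where "cM j = sqrt (\<Sum>k<n. (M $$ (k,j))\<^sup>2)" for j
  have nr: "real n > 0" using n by simp
  have b0: "b \<ge> 0"
  proof -
    have "0 \<le> sqrt (\<Sum>k<n. (M $$ (k,0))\<^sup>2)" by (simp add: sum_nonneg)
    thus ?thesis using col_bound[OF M _ b, of 0] d by linarith
  qed
  have cMb: "cM j \<le> b" if "j < d" for j using col_bound[OF M that b] by (simp add: cM_def)
  have cM0: "cM j \<ge> 0" for j by (simp add: cM_def sum_nonneg)
  have cB0: "cB j \<ge> 0" for j by (simp add: cB_def sum_nonneg)
  have Dm: "S $$ (j,j) \<le> Dm" if "j < d" for j
  proof -
    have eq: "{S $$ (i, i) | i. i < d} = (\<lambda>i. S $$ (i,i)) ` {..<d}" by auto
    show ?thesis unfolding Dm_def eq using that by (intro Max_ge) auto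
  qed
  have cBb: "cB j \<le> sqrt n * sqrt (t + Dm)" if "j < d" for j
  proof -
    have "(\<Sum>k<n. (Bm $$ (k,j))\<^sup>2) \<le> real n * S $$ (j,j) + real n * t"
      using G[rule_format, OF that that] by (simp add: power2_eq_square abs_le_iff)
    also have "\<dots> \<le> real n * (t + Dm)" using Dm[OF that] nr by (simp add: algebra_simps)
    finally have "cB j \<le> sqrt (real n * (t + Dm))" unfolding cB_def by (rule real_sqrt_le_mono)
    thus ?thesis by (simp add: real_sqrt_mult)
  qed
  have entry: "\<bar>E $$ (i,j)\<bar> \<le> real n * t + b\<^sup>2 + 2 * b * (sqrt n * sqrt (t + Dm))" if "i < d" "j < d" for i j
  proof -
    have e: "E $$ (i,j) = ((\<Sum>k<n. Bm $$ (k,i) * Bm $$ (k,j)) - real n * S $$ (i,j)) + (\<Sum>k<n. M $$ (k,i) * M $$ (k,j))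
      + (\<Sum>k<n. M $$ (k,i) * Bm $$ (k,j)) + (\<Sum>k<n. Bm $$ (k,i) * M $$ (k,j))"
      unfolding E_def by (rule E_entry[OF Bm M S that])
    have t1: "\<bar>(\<Sum>k<n. Bm $$ (k,i) * Bm $$ (k,j)) - real n * S $$ (i,j)\<bar> \<le> real n * t" using G that by auto
    have t2: "\<bar>\<Sum>k<n. M $$ (k,i) * M $$ (k,j)\<bar> \<le> b\<^sup>2"
    proof -
      have "\<bar>\<Sum>k<n. M $$ (k,i) * M $$ (k,j)\<bar> \<le> cM i * cM j" unfolding cM_def by (rule cs_abs)
      also have "\<dots> \<le> b * b" by (rule mult_mono[OF cMb[OF that(1)] cMb[OF that(2)] b0 cM0])
      finally show ?thesis by (simp add: power2_eq_square)
    qed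
    have t3: "\<bar>\<Sum>k<n. M $$ (k,i) * Bm $$ (k,j)\<bar> \<le> b * (sqrt n * sqrt (t + Dm))"
    proof -
      have "\<bar>\<Sum>k<n. M $$ (k,i) * Bm $$ (k,j)\<bar> \<le> cM i * cB j" unfolding cM_def cB_def by (rule cs_abs)
      also have "\<dots> \<le> b * (sqrt n * sqrt (t + Dm))" using cMb cBb that cM0 cB0 b0 by (intro mult_mono) auto
      finally show ?thesis .
    qed
    have t4: "\<bar>\<Sum>k<n. Bm $$ (k,i) * M $$ (k,j)\<bar> \<le> b * (sqrt n * sqrt (t + Dm))"
    proof -
      have "\<bar>\<Sum>k<n. Bm $$ (k,i) * M $$ (k,j)\<bar> \<le> cB i * cM j" unfolding cM_def cB_def by (rule cs_abs)
      also have "\<dots> \<le> (sqrt n * sqrt (t + Dm)) * b" using cMb cBb that cM0 cB0 b0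
        by (intro mult_mono) (auto intro: order.trans[OF cB0])
      finally show ?thesis by (simp add: mult.commute)
    qed
    show ?thesis unfolding e using t1 t2 t3 t4 by linarith
  qed
  have fin: "finite {\<bar>E $$ (i, j)\<bar> | i j. i < d \<and> j < d}"
  proof -
    have "{\<bar>E $$ (i, j)\<bar> | i j. i < d \<and> j < d} = (\<lambda>p. \<bar>E $$ p\<bar>) ` ({..<d} \<times> {..<d})" by auto
    thus ?thesis by simp
  qed
  have "\<bar>E $$ (0, 0)\<bar> \<in> {\<bar>E $$ (i, j)\<bar> | i j. i < d \<and> j < d}" unfolding mem_Collect_eq using d by (intro exI[of _ 0]) auto
  hence ne: "{\<bar>E $$ (i, j)\<bar> | i j. i < d \<and> j < d} \<noteq> {}" by auto
  have "Max {\<bar>E $$ (i, j)\<bar> | i j. i < d \<and> j < d} \<le> real n * t + b\<^sup>2 + 2 * b * (sqrt n * sqrt (t + Dm))"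
    using entry by (intro Max.boundedI[OF fin ne]) auto
  hence "(1 / real n) * Max {\<bar>E $$ (i, j)\<bar> | i j. i < d \<and> j < d}
      \<le> (1 / real n) * (real n * t + b\<^sup>2 + 2 * b * (sqrt n * sqrt (t + Dm)))"
    using nr by (intro mult_left_mono) auto
  also have "\<dots> = t + b\<^sup>2 / n + 2 * b / sqrt n * sqrt (t + Dm)"
  proof -
    have sq: "real n = sqrt n * sqrt n" using nr by simp
    have sp: "sqrt (real n) > 0" using nr by simp
    have "(1 / real n) * (2 * b * (sqrt n * sqrt (t + Dm))) = 2 * b / sqrt n * sqrt (t + Dm)"
      using sp by (subst sq) (simp add: field_simps)
    thus ?thesis using nr by (simp add: distrib_left)
  qed
  finally show ?thesis unfolding E_def Dm_def .
qed


lemma subgaussian_mono: "subgaussian P X s1 \<Longrightarrow> s1 \<le> s2 \<Longrightarrow> subgaussian P X s2"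
  unfolding subgaussian_def
  by (auto intro: order.trans simp: mult_left_mono divide_right_mono)

lemma main_lemma:
  fixes P :: "'a measure" and n d :: nat and \<sigma> b :: real and M S :: "real mat" and B :: "'a \<Rightarrow> real mat"
  assumes P: "prob_space P" and n: "n \<ge> 1" and d: "d \<ge> 2" and M: "M \<in> carrier_mat n d" and S: "S \<in> carrier_mat d d"
    and Bc: "\<forall>\<omega>\<in>space P. B \<omega> \<in> carrier_mat n d"
    and ind: "prob_space.indep_vars P (\<lambda>_. PiM {..<d} (\<lambda>_. borel)) (row_rv B d) {..<n}"
    and mean: "\<forall>i<n. \<forall>j<d. integrable P (\<lambda>\<omega>. B \<omega> $$ (i, j)) \<and>
                     prob_space.expectation P (\<lambda>\<omega>. B \<omega> $$ (i, j)) = 0"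
    and cov: "\<forall>i<n. \<forall>j<d. \<forall>l<d. integrable P (\<lambda>\<omega>. B \<omega> $$ (i, j) * B \<omega> $$ (i, l)) \<and>
                     prob_space.expectation P (\<lambda>\<omega>. B \<omega> $$ (i, j) * B \<omega> $$ (i, l)) = S $$ (j, l)"
    and sg: "\<forall>i<n. \<forall>u::nat \<Rightarrow> real. (\<Sum>j<d. (u j)\<^sup>2) = 1 \<longrightarrow>
            subgaussian P (\<lambda>\<omega>. \<Sum>j<d. u j * B \<omega> $$ (i, j)) (\<sigma>\<^sup>2)"
    and b: "norm_1to2 M \<le> b"
  shows "(let E = (\<lambda>\<omega>. (transpose_mat (B \<omega>) * B \<omega> - of_nat n \<cdot>\<^sub>m S)
                    + (transpose_mat M * M + transpose_mat M * B \<omega> + transpose_mat (B \<omega>) * M));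
          t = CC * \<sigma>\<^sup>2 * (sqrt (ln d / n) + ln d / n)
      in measure P {\<omega> \<in> space P.
            (1 / real n) * Max {\<bar>E \<omega> $$ (i, j)\<bar> | i j. i < d \<and> j < d}
              \<le> t + b\<^sup>2 / n + 2 * b / sqrt n * sqrt (t + Max {S $$ (i, i) | i. i < d})}
         \<ge> 1 - 2 * real d powr (-10))"
proof -
  interpret prob_space P by fact
  define t where "t = CC * \<sigma>\<^sup>2 * (sqrt (ln d / n) + ln d / n)"
  define r where "r = sqrt (ln d / n) + ln d / n"
  have nr: "real n > 0" using n by simp
  have dr: "real d \<ge> 2" using d by simp
  have r0: "r > 0" using dr nr by (simp add: r_def add_pos_nonneg)
  have CC0: "CC > 0" by (simp add: CC_def cB_def add_pos_nonneg)
  have t0: "t \<ge> 0" using r0 CC0 by (simp add: t_def r_def[symmetric])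
  define e where "e j = (\<lambda>l::nat. if l = j then 1 else (0::real))" for j
  have e1: "(\<Sum>l<d. (e j l)\<^sup>2) = 1" if "j < d" for j
  proof -
    have "(\<Sum>l<d. (e j l)\<^sup>2) = (\<Sum>l<d. if l = j then 1 else 0)" by (rule sum.cong) (auto simp: e_def)
    also have "\<dots> = 1" using that by simp
    finally show ?thesis .
  qed
  have sge: "subgaussian P (\<lambda>\<omega>. B \<omega> $$ (k, j)) (\<sigma>\<^sup>2)" if "k < n" "j < d" for k j
  proof -
    have "(\<lambda>\<omega>. \<Sum>l<d. e j l * B \<omega> $$ (k, l)) = (\<lambda>\<omega>. B \<omega> $$ (k, j))"
    proof
      fix \<omega>
      have "(\<Sum>l<d. e j l * B \<omega> $$ (k, l)) = (\<Sum>l<d. if l = j then B \<omega> $$ (k, l) else 0)"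
        by (rule sum.cong) (auto simp: e_def)
      also have "\<dots> = B \<omega> $$ (k, j)" using that by simp
      finally show "(\<Sum>l<d. e j l * B \<omega> $$ (k, l)) = B \<omega> $$ (k, j)" .
    qed
    thus ?thesis using sg[rule_format, OF that(1) e1[OF that(2)]] by simp
  qed
  have ent[measurable]: "(\<lambda>\<omega>. B \<omega> $$ (k, j)) \<in> borel_measurable P" if "k < n" "j < d" for k j
    using sge[OF that] by (simp add: subgaussian_def)
  define X where "X i j k \<omega> = B \<omega> $$ (k,i) * B \<omega> $$ (k,j) - S $$ (i,j)" for i j k \<omega>
  have indX: "indep_vars (\<lambda>_. borel) (X i j) {..<n}" if ij: "i < d" "j < d" for i j
  proof -
    have meas: "(\<lambda>x. x i * x j - S $$ (i,j)) \<in> measurable (PiM {..<d} (\<lambda>_. borel)) borel"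
    proof -
      have "(\<lambda>x. x i) \<in> measurable (PiM {..<d} (\<lambda>_. borel)) borel"
        by (rule measurable_component_singleton) (simp add: ij)
      moreover have "(\<lambda>x. x j) \<in> measurable (PiM {..<d} (\<lambda>_. borel)) borel"
        by (rule measurable_component_singleton) (simp add: ij)
      ultimately show ?thesis by measurable
    qed
    have "indep_vars (\<lambda>_. borel) (\<lambda>k \<omega>. (\<lambda>x. x i * x j - S $$ (i,j)) (row_rv B d k \<omega>)) {..<n}"
      by (rule indep_vars_compose2[OF ind]) (rule meas)
    moreover have "(\<lambda>k \<omega>. (\<lambda>x. x i * x j - S $$ (i,j)) (row_rv B d k \<omega>)) = X i j"
      using ij by (simp add: fun_eq_iff row_rv_def X_def)
    ultimately show ?thesis by simp
  qed
  have mgfX: "integrable P (\<lambda>\<omega>. exp (l * X i j k \<omega>)) \<and> (\<integral>\<omega>. exp (l * X i j k \<omega>) \<partial>P) \<le> exp (cB * l\<^sup>2 * s\<^sup>2)"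
    if "i < d" "j < d" "k < n" "s > 0" "\<sigma>\<^sup>2 \<le> s" "\<bar>l\<bar> \<le> 1 / (16 * s)" for i j k s l
  proof -
    have sg1: "subgaussian P (\<lambda>\<omega>. B \<omega> $$ (k, i)) s" using sge[of k i] that subgaussian_mono by blast
    have sg2: "subgaussian P (\<lambda>\<omega>. B \<omega> $$ (k, j)) s" using sge[of k j] that subgaussian_mono by blast
    have m1: "(\<integral>\<omega>. B \<omega> $$ (k, i) \<partial>P) = 0" using mean that by auto
    have m2: "(\<integral>\<omega>. B \<omega> $$ (k, j) \<partial>P) = 0" using mean that by auto
    have i12: "integrable P (\<lambda>\<omega>. B \<omega> $$ (k, i) * B \<omega> $$ (k, j))" using cov that by auto
    have mu: "(\<integral>\<omega>. B \<omega> $$ (k, i) * B \<omega> $$ (k, j) \<partial>P) = S $$ (i,j)" using cov that by auto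
    show ?thesis using subexp_mgf[OF P sg1 sg2 m1 m2 \<open>s > 0\<close> i12 mu \<open>\<bar>l\<bar> \<le> 1 / (16 * s)\<close>]
      by (simp add: X_def)
  qed
  have tailS: "measure P {\<omega> \<in> space P. \<bar>\<Sum>k<n. X i j k \<omega>\<bar> > n * \<tau>} \<le> 2 * real d powr (-12)"
    if "i < d" "j < d" "s > 0" "\<sigma>\<^sup>2 \<le> s" "\<tau> \<ge> CC * s * r" for i j :: nat and s \<tau> :: real
    using that by (intro tail_two[OF P indX _ n dr mgfX]) (auto simp: r_def)
  have Xm[measurable]: "X i j k \<in> borel_measurable P" if "i < d" "j < d" "k < n" for i j k
    unfolding X_def[abs_def] using that by (intro borel_measurable_diff borel_measurable_times ent borel_measurable_const) auto
  have tailE: "measure P {\<omega> \<in> space P. \<bar>\<Sum>k<n. X i j k \<omega>\<bar> > n * t} \<le> 2 * real d powr (-12)"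
    if ij: "i < d" "j < d" for i j
  proof (cases "\<sigma> = 0")
    case False
    thus ?thesis using tailS[OF ij, of "\<sigma>\<^sup>2" t] by (simp add: t_def r_def)
  next
    case True
    hence t00: "t = 0" by (simp add: t_def)
    define A where "A m = {\<omega> \<in> space P. \<bar>\<Sum>k<n. X i j k \<omega>\<bar> > n * inverse (real (Suc m))}" for m
    have As: "range A \<subseteq> sets P" using ij unfolding A_def by auto
    have Ainc: "incseq A"
    proof (rule incseq_SucI)
      fix m
      have "real n * inverse (real (Suc (Suc m))) \<le> real n * inverse (real (Suc m))"
        using nr by (intro mult_left_mono) (auto simp: field_simps)
      thus "A m \<subseteq> A (Suc m)" unfolding A_def by auto
    qed
    have Ab: "measure P (A m) \<le> 2 * real d powr (-12)" for m
    proof -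
      define s where "s = inverse (real (Suc m)) / (CC * r)"
      have s: "s > 0" using CC0 r0 by (simp add: s_def)
      show ?thesis unfolding A_def
        using CC0 r0 s True by (intro tailS[OF ij s]) (auto simp: s_def)
    qed
    have U: "(\<Union>m. A m) = {\<omega> \<in> space P. \<bar>\<Sum>k<n. X i j k \<omega>\<bar> > n * t}"
    proof
      show "(\<Union>m. A m) \<subseteq> {\<omega> \<in> space P. \<bar>\<Sum>k<n. X i j k \<omega>\<bar> > n * t}"
      proof (rule UN_least)
        fix m show "A m \<subseteq> {\<omega> \<in> space P. \<bar>\<Sum>k<n. X i j k \<omega>\<bar> > n * t}"
        proof
          fix \<omega> assume "\<omega> \<in> A m"
          hence w: "\<omega> \<in> space P" "n * inverse (real (Suc m)) < \<bar>\<Sum>k<n. X i j k \<omega>\<bar>" unfolding A_def by auto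
          have "0 \<le> real n * inverse (real (Suc m))" by simp
          moreover have "real n * t = 0" using t00 by simp
          ultimately have "real n * t < \<bar>\<Sum>k<n. X i j k \<omega>\<bar>" using w(2) by linarith
          thus "\<omega> \<in> {\<omega> \<in> space P. \<bar>\<Sum>k<n. X i j k \<omega>\<bar> > n * t}" using w(1) by simp
        qed
      qed
      show "{\<omega> \<in> space P. \<bar>\<Sum>k<n. X i j k \<omega>\<bar> > n * t} \<subseteq> (\<Union>m. A m)"
      proof
        fix \<omega> assume w: "\<omega> \<in> {\<omega> \<in> space P. \<bar>\<Sum>k<n. X i j k \<omega>\<bar> > n * t}"
        hence pos: "\<bar>\<Sum>k<n. X i j k \<omega>\<bar> / n > 0" using nr t00 by simp
        obtain m0 :: nat where m0: "m0 > 0" "inverse (real m0) < \<bar>\<Sum>k<n. X i j k \<omega>\<bar> / n"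
          using ex_inverse_of_nat_less[OF pos] by auto
        have "Suc (m0 - 1) = m0" using m0 by simp
        hence "n * inverse (real (Suc (m0 - 1))) < \<bar>\<Sum>k<n. X i j k \<omega>\<bar>"
          using m0 nr by (simp add: field_simps)
        thus "\<omega> \<in> (\<Union>m. A m)" using w unfolding A_def by auto
      qed
    qed
    have "(\<lambda>m. measure P (A m)) \<longlonglongrightarrow> measure P (\<Union>m. A m)"
      by (rule finite_Lim_measure_incseq[OF As Ainc])
    hence "measure P (\<Union>m. A m) \<le> 2 * real d powr (-12)"
      using Ab by (intro LIMSEQ_le_const2) auto
    thus ?thesis unfolding U .
  qed
  define Bad where "Bad = (\<Union>p\<in>{..<d} \<times> {..<d}. {\<omega> \<in> space P. \<bar>\<Sum>k<n. X (fst p) (snd p) k \<omega>\<bar> > n * t})"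
  have Bads: "Bad \<in> sets P" unfolding Bad_def by (intro sets.finite_UN) auto
  have mBad: "measure P Bad \<le> 2 * real d powr (-10)"
  proof -
    have "measure P Bad \<le> (\<Sum>p\<in>{..<d} \<times> {..<d}. measure P {\<omega> \<in> space P. \<bar>\<Sum>k<n. X (fst p) (snd p) k \<omega>\<bar> > n * t})"
      unfolding Bad_def by (intro measure_UNION_le) auto
    also have "\<dots> \<le> real (card ({..<d} \<times> {..<d})) * (2 * real d powr (-12))"
      by (intro sum_bounded_above) (auto intro!: tailE)
    also have "\<dots> = 2 * ((real d)\<^sup>2 * real d powr (-12))" by (simp add: power2_eq_square)
    also have "(real d)\<^sup>2 * real d powr (-12) = real d powr (-10)"
    proof -
      have e1: "real d powr (-10) = real d powr 2 * real d powr (-12)" by (subst powr_add[symmetric]) simp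
      have e2: "real d powr 2 = (real d)\<^sup>2" using dr by (simp add: powr_numeral)
      show ?thesis using e1 e2 by simp
    qed
    finally show ?thesis .
  qed
  define E where "E = (\<lambda>\<omega>. (transpose_mat (B \<omega>) * B \<omega> - of_nat n \<cdot>\<^sub>m S)
                    + (transpose_mat M * M + transpose_mat M * B \<omega> + transpose_mat (B \<omega>) * M))"
  define R where "R = t + b\<^sup>2 / n + 2 * b / sqrt n * sqrt (t + Max {S $$ (i, i) | i. i < d})"
  define Tg where "Tg = {\<omega> \<in> space P. (1 / real n) * Max {\<bar>E \<omega> $$ (i, j)\<bar> | i j. i < d \<and> j < d} \<le> R}"
  define F where "F p \<omega> = ((\<Sum>k<n. B \<omega> $$ (k,fst p) * B \<omega> $$ (k,snd p)) - real n * S $$ (fst p,snd p)) + (\<Sum>k<n. M $$ (k,fst p) * M $$ (k,snd p))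
      + (\<Sum>k<n. M $$ (k,fst p) * B \<omega> $$ (k,snd p)) + (\<Sum>k<n. B \<omega> $$ (k,fst p) * M $$ (k,snd p))" for p \<omega>
  have TgF: "Tg = {\<omega> \<in> space P. (1 / real n) * Max ((\<lambda>p. \<bar>F p \<omega>\<bar>) ` ({..<d} \<times> {..<d})) \<le> R}"
  proof -
    have "{\<bar>E \<omega> $$ (i, j)\<bar> | i j. i < d \<and> j < d} = (\<lambda>p. \<bar>F p \<omega>\<bar>) ` ({..<d} \<times> {..<d})" if "\<omega> \<in> space P" for \<omega>
    proof -
      have "E \<omega> $$ p = F p \<omega>" if "p \<in> {..<d} \<times> {..<d}" for p
        using that Bc \<open>\<omega> \<in> space P\<close> unfolding E_def F_def
        by (cases p) (simp add: E_entry[OF _ M S])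
      hence "(\<lambda>p. \<bar>F p \<omega>\<bar>) ` ({..<d} \<times> {..<d}) = (\<lambda>p. \<bar>E \<omega> $$ p\<bar>) ` ({..<d} \<times> {..<d})" by auto
      also have "\<dots> = {\<bar>E \<omega> $$ (i, j)\<bar> | i j. i < d \<and> j < d}" by auto
      finally show ?thesis by simp
    qed
    thus ?thesis unfolding Tg_def by auto
  qed
  have Fm: "(\<lambda>\<omega>. \<bar>F p \<omega>\<bar>) \<in> borel_measurable P" if "p \<in> {..<d} \<times> {..<d}" for p
    using that unfolding F_def by (cases p) (auto intro!: borel_measurable_abs borel_measurable_add borel_measurable_diff borel_measurable_sum borel_measurable_times)
  have Tgs: "Tg \<in> sets P"
  proof -
    have "(\<lambda>\<omega>. Max ((\<lambda>p. \<bar>F p \<omega>\<bar>) ` ({..<d} \<times> {..<d}))) \<in> borel_measurable P"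
      by (rule borel_measurable_Max) (auto intro: Fm)
    thus ?thesis unfolding TgF by measurable
  qed
  have sub: "space P - Bad \<subseteq> Tg"
  proof
    fix \<omega> assume w: "\<omega> \<in> space P - Bad"
    have Bw: "B \<omega> \<in> carrier_mat n d" using w Bc by auto
    have G: "\<forall>i<d. \<forall>j<d. \<bar>(\<Sum>k<n. B \<omega> $$ (k,i) * B \<omega> $$ (k,j)) - real n * S $$ (i,j)\<bar> \<le> real n * t"
    proof (intro allI impI)
      fix i j assume ij: "i < d" "j < d"
      have "\<not> \<bar>\<Sum>k<n. X i j k \<omega>\<bar> > n * t" using w ij unfolding Bad_def by auto
      moreover have "(\<Sum>k<n. X i j k \<omega>) = (\<Sum>k<n. B \<omega> $$ (k,i) * B \<omega> $$ (k,j)) - real n * S $$ (i,j)"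
        by (simp add: X_def sum_subtractf)
      ultimately show "\<bar>(\<Sum>k<n. B \<omega> $$ (k,i) * B \<omega> $$ (k,j)) - real n * S $$ (i,j)\<bar> \<le> real n * t" by simp
    qed
    have "(1 / real n) * Max {\<bar>E \<omega> $$ (i, j)\<bar> | i j. i < d \<and> j < d} \<le> R"
      unfolding E_def R_def using det_bound[OF Bw M S b n _ t0 G] d by simp
    thus "\<omega> \<in> Tg" using w unfolding Tg_def by auto
  qed
  have "1 - 2 * real d powr (-10) \<le> 1 - measure P Bad" using mBad by simp
  also have "\<dots> = measure P (space P - Bad)" using prob_compl[OF Bads] by simp
  also have "\<dots> \<le> measure P Tg" by (rule finite_measure_mono[OF sub Tgs])
  finally show ?thesis unfolding Let_def Tg_def E_def R_def t_def .
qed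


theorem lemma5:
  "\<exists>C>0. \<exists>C'>0. \<forall>(P :: 'a measure) (n::nat) (d::nat) (k::nat) (\<sigma>::real) (b::real)
       (M :: real mat) (\<Sigma> :: real mat) (B :: 'a \<Rightarrow> real mat).
     ( prob_space P \<and> n \<ge> 1 \<and> d \<ge> 2 \<and>
       M \<in> carrier_mat n d \<and> \<Sigma> \<in> carrier_mat d d \<and>
       (\<forall>\<omega>\<in>space P. B \<omega> \<in> carrier_mat n d) \<and>
       \<comment> \<open>rows i.i.d.\<close>
       prob_space.indep_vars P (\<lambda>_. PiM {..<d} (\<lambda>_. borel)) (row_rv B d) {..<n} \<and>
       (\<forall>i<n. distr P (PiM {..<d} (\<lambda>_. borel)) (row_rv B d i)
                = distr P (PiM {..<d} (\<lambda>_. borel)) (row_rv B d 0)) \<and>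
       \<comment> \<open>zero mean and covariance \<Sigma>\<close>
       (\<forall>i<n. \<forall>j<d. integrable P (\<lambda>\<omega>. B \<omega> $$ (i, j)) \<and>
                     prob_space.expectation P (\<lambda>\<omega>. B \<omega> $$ (i, j)) = 0) \<and>
       (\<forall>i<n. \<forall>j<d. \<forall>l<d. integrable P (\<lambda>\<omega>. B \<omega> $$ (i, j) * B \<omega> $$ (i, l)) \<and>
                     prob_space.expectation P (\<lambda>\<omega>. B \<omega> $$ (i, j) * B \<omega> $$ (i, l)) = \<Sigma> $$ (j, l)) \<and>
       \<comment> \<open>sub-Gaussian rows with parameter \<sigma>^2\<close>
       (\<forall>i<n. \<forall>u::nat \<Rightarrow> real. (\<Sum>j<d. (u j)\<^sup>2) = 1 \<longrightarrow>
            subgaussian P (\<lambda>\<omega>. \<Sum>j<d. u j * B \<omega> $$ (i, j)) (\<sigma>\<^sup>2)) \<and>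
       \<comment> \<open>column norm bound on M\<close>
       norm_1to2 M \<le> b \<and>
       \<comment> \<open>k-sparse unit top eigenvector and positive eigengap\<close>
       (\<exists>v \<in> carrier_vec d. (\<Sum>j<d. (v $ j)\<^sup>2) = 1 \<and> card {j. j < d \<and> v $ j \<noteq> 0} \<le> k \<and>
            \<Sigma> *\<^sub>v v = eigenvalues_desc \<Sigma> ! 0 \<cdot>\<^sub>v v) \<and>
       eigenvalues_desc \<Sigma> ! 0 - eigenvalues_desc \<Sigma> ! 1 > 0 )
     \<longrightarrow>
     (let E = (\<lambda>\<omega>. (transpose_mat (B \<omega>) * B \<omega> - of_nat n \<cdot>\<^sub>m \<Sigma>)
                    + (transpose_mat M * M + transpose_mat M * B \<omega> + transpose_mat (B \<omega>) * M));
          t = C * \<sigma>\<^sup>2 * (sqrt (ln d / n) + ln d / n)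
      in measure P {\<omega> \<in> space P.
            (1 / real n) * Max {\<bar>E \<omega> $$ (i, j)\<bar> | i j. i < d \<and> j < d}
              \<le> t + b\<^sup>2 / n + 2 * b / sqrt n * sqrt (t + Max {\<Sigma> $$ (i, i) | i. i < d})}
         \<ge> 1 - C' * real d powr (-10))"
  apply (rule exI[of _ CC], rule conjI, simp add: CC_def cB_def add_pos_nonneg)
  apply (rule exI[of _ 2], rule conjI, simp)
  apply (intro allI impI)
  apply (elim conjE)
  apply (rule main_lemma)
            apply assumption+
  done

end
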